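(* If $\sum_{n=1}^N r_n \le C_{min}$, then every packet $p^{g,j}$ of the aggregate flow has delay $d^{g,j}-a^{g,j} \le \frac{\sum_{n}\sigma_n}{C_{min}}$.
   Context: A multiclass FIFO system serves packets from $N$ classes. Class $n$ has constant service rate $C_n>0$; $C_{min}=\min_n C_n$. The aggregate flow consists of all packets $p^{g,1},p^{g,2},\dots$ in order of arrival (ties broken arbitrarily), with arrival times $0\le a^{g,1}\le a^{g,2}\le\cdots$, lengths $l^{g,j}>0$, and departure times $d^{g,j}=\max\{a^{g,j},d^{g,j-1}\}+l^{g,j}/C_{c(j)}$, $d^{g,0}=0$, $c(j)$ the class of $p^{g,j}$. $A_n(s,t)$ denotes the total length of class-$n$ packets arriving in $[s,t]$. Each class $n$ is leaky-bucket constrained: $A_n(s,t)\le r_n(t-s)+\sigma_n$ for all $0\le s\le t$, with constants $r_n,\sigma_n\ge 0$. *)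

theory Defs
  imports "HOL-Analysis.Analysis"
begin

text \<open>Packets of the aggregate flow are indexed by positive naturals j (index 0 unused).
  a j: arrival time, l j: length, c j: class, C n: service rate of class n.\<close>

primrec departure :: "(nat \<Rightarrow> real) \<Rightarrow> (nat \<Rightarrow> real) \<Rightarrow> (nat \<Rightarrow> real) \<Rightarrow> (nat \<Rightarrow> nat) \<Rightarrow> nat \<Rightarrow> real" where
  "departure a l C c 0 = 0"
| "departure a l C c (Suc j) =
     max (a (Suc j)) (departure a l C c j) + l (Suc j) / C (c (Suc j))"

definition arrivals :: "nat set \<Rightarrow> (nat \<Rightarrow> real) \<Rightarrow> (nat \<Rightarrow> real) \<Rightarrow> (nat \<Rightarrow> nat) \<Rightarrow> nat \<Rightarrow> real \<Rightarrow> real \<Rightarrow> ennreal" where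
  "arrivals P a l c n s t = (\<Sum>\<^sub>\<infinity> j \<in> {j \<in> P. c j = n \<and> s \<le> a j \<and> a j \<le> t}. ennreal (l j))"

end

theory Submission
  imports Defs
begin

lemma busy:
  assumes P_closed: "\<forall>j\<in>P. \<forall>i. 1 \<le> i \<and> i \<le> j \<longrightarrow> i \<in> P"
    and arr_nonneg: "\<forall>j\<in>P. 0 \<le> a j"
  shows "j \<in> P \<Longrightarrow> j \<ge> 1 \<Longrightarrow> \<exists>k. 1 \<le> k \<and> k \<le> j \<and>
     departure a l C c j = a k + (\<Sum>i=k..j. l i / C (c i))"
proof (induction j)
  case 0 then show ?case by simp
next
  case (Suc m)
  show ?case
  proof (cases "m = 0")
    case True
    then have "a 1 \<ge> 0" using Suc arr_nonneg by auto
    then show ?thesis using True by (intro exI[of _ 1]) auto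
  next
    case False
    then have mP: "m \<in> P" using P_closed Suc.prems by auto
    show ?thesis
    proof (cases "departure a l C c m \<le> a (Suc m)")
      case True
      then show ?thesis by (intro exI[of _ "Suc m"]) auto
    next
      case F2: False
      from Suc.IH mP False obtain k where k: "1 \<le> k" "k \<le> m"
        "departure a l C c m = a k + (\<Sum>i=k..m. l i / C (c i))" by auto
      have "departure a l C c (Suc m) = departure a l C c m + l (Suc m) / C (c (Suc m))"
        using F2 by simp
      also have "\<dots> = a k + (\<Sum>i=k..Suc m. l i / C (c i))"
        using k by (simp add: sum.cl_ivl_Suc)
      finally show ?thesis using k by (intro exI[of _ k]) auto
    qed
  qed
qed

theorem corollary1:
  fixes N :: nat and C r \<sigma> :: "nat \<Rightarrow> real"
    and P :: "nat set" and a l :: "nat \<Rightarrow> real" and c :: "nat \<Rightarrow> nat"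
  assumes N_pos: "N \<ge> 1"
    and C_pos: "\<forall>n\<in>{1..N}. C n > 0"
    and P_pos: "\<forall>j\<in>P. j \<ge> 1"
    and P_closed: "\<forall>j\<in>P. \<forall>i. 1 \<le> i \<and> i \<le> j \<longrightarrow> i \<in> P"
    and cls: "\<forall>j\<in>P. c j \<in> {1..N}"
    and arr_nonneg: "\<forall>j\<in>P. 0 \<le> a j"
    and arr_mono: "\<forall>i\<in>P. \<forall>j\<in>P. i \<le> j \<longrightarrow> a i \<le> a j"
    and len_pos: "\<forall>j\<in>P. l j > 0"
    and r_nonneg: "\<forall>n\<in>{1..N}. r n \<ge> 0"
    and \<sigma>_nonneg: "\<forall>n\<in>{1..N}. \<sigma> n \<ge> 0"
    and leaky: "\<forall>n\<in>{1..N}. \<forall>s t. 0 \<le> s \<and> s \<le> t \<longrightarrow>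
                  arrivals P a l c n s t \<le> ennreal (r n * (t - s) + \<sigma> n)"
    and stab: "(\<Sum>n=1..N. r n) \<le> Min (C ` {1..N})"
  shows "\<forall>j\<in>P. departure a l C c j - a j \<le> (\<Sum>n=1..N. \<sigma> n) / Min (C ` {1..N})"
proof
  fix j assume jP: "j \<in> P"
  define Cm where "Cm = Min (C ` {1..N})"
  have Cm_pos: "Cm > 0" unfolding Cm_def using C_pos N_pos by (subst Min_gr_iff) auto
  have Cm_le: "\<And>n. n \<in> {1..N} \<Longrightarrow> Cm \<le> C n" unfolding Cm_def by simp
  obtain k where k: "1 \<le> k" "k \<le> j" "departure a l C c j = a k + (\<Sum>i=k..j. l i / C (c i))"
    using busy[OF P_closed arr_nonneg jP] P_pos jP by blast
  have S: "{k..j} \<subseteq> P" using P_closed jP k by auto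
  have kP: "k \<in> P" using S k by auto
  have akj: "a k \<le> a j" using arr_mono kP jP k by auto
  have ak0: "0 \<le> a k" using arr_nonneg kP by auto
  have step1: "(\<Sum>i=k..j. l i / C (c i)) \<le> (\<Sum>i=k..j. l i / Cm)"
  proof (rule sum_mono)
    fix i assume "i \<in> {k..j}"
    then have iP: "i \<in> P" using S by auto
    then show "l i / C (c i) \<le> l i / Cm"
      using len_pos cls Cm_le[of "c i"] Cm_pos by (intro divide_left_mono) auto
  qed
  have grp: "(\<Sum>i=k..j. l i) = (\<Sum>n=1..N. \<Sum>i\<in>{i\<in>{k..j}. c i = n}. l i)"
  proof -
    have "(\<Sum>i=k..j. l i) = (\<Sum>i=k..j. \<Sum>n=1..N. if c i = n then l i else 0)"
    proof (rule sum.cong[OF refl])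
      fix i assume "i \<in> {k..j}"
      then have "c i \<in> {1..N}" using S cls by auto
      then show "l i = (\<Sum>n=1..N. if c i = n then l i else 0)"
        by (simp add: sum.delta)
    qed
    also have "\<dots> = (\<Sum>n=1..N. \<Sum>i=k..j. if c i = n then l i else 0)"
      by (rule sum.swap)
    also have "\<dots> = (\<Sum>n=1..N. \<Sum>i\<in>{i\<in>{k..j}. c i = n}. l i)"
      by (rule sum.cong[OF refl], rule sum.inter_filter[symmetric]) simp
    finally show ?thesis .
  qed
  have cl: "(\<Sum>i\<in>{i\<in>{k..j}. c i = n}. l i) \<le> r n * (a j - a k) + \<sigma> n" if n: "n \<in> {1..N}" for n
  proof -
    let ?T = "{i\<in>{k..j}. c i = n}"
    let ?B = "{i \<in> P. c i = n \<and> a k \<le> a i \<and> a i \<le> a j}"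
    have TB: "?T \<subseteq> ?B" using S arr_mono kP jP by auto
    have "ennreal (\<Sum>i\<in>?T. l i) = (\<Sum>i\<in>?T. ennreal (l i))"
      using S len_pos by (subst sum_ennreal) (auto, meson atLeastAtMost_iff less_imp_le subsetD)
    also have "\<dots> = infsum (\<lambda>i. ennreal (l i)) ?T" by simp
    also have "\<dots> \<le> infsum (\<lambda>i. ennreal (l i)) ?B"
      by (rule infsum_mono_neutral) (use TB in \<open>auto intro: nonneg_summable_on_complete\<close>)
    also have "\<dots> = arrivals P a l c n (a k) (a j)" unfolding arrivals_def by simp
    also have "\<dots> \<le> ennreal (r n * (a j - a k) + \<sigma> n)" using leaky n ak0 akj by auto
    finally have "ennreal (\<Sum>i\<in>?T. l i) \<le> ennreal (r n * (a j - a k) + \<sigma> n)" .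
    moreover have "0 \<le> r n * (a j - a k) + \<sigma> n" using r_nonneg \<sigma>_nonneg n akj by auto
    ultimately show ?thesis by (simp add: ennreal_le_iff)
  qed
  have "(\<Sum>i=k..j. l i) \<le> (\<Sum>n=1..N. r n * (a j - a k) + \<sigma> n)"
    unfolding grp by (rule sum_mono) (use cl in auto)
  also have "\<dots> = (\<Sum>n=1..N. r n) * (a j - a k) + (\<Sum>n=1..N. \<sigma> n)"
    by (simp add: sum.distrib sum_distrib_right)
  also have "\<dots> \<le> Cm * (a j - a k) + (\<Sum>n=1..N. \<sigma> n)"
    using stab akj unfolding Cm_def by (intro add_right_mono mult_right_mono) auto
  finally have L: "(\<Sum>i=k..j. l i) \<le> Cm * (a j - a k) + (\<Sum>n=1..N. \<sigma> n)" .
  have "(\<Sum>i=k..j. l i / Cm) = (\<Sum>i=k..j. l i) / Cm" by (simp add: sum_divide_distrib)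
  also have "\<dots> \<le> (Cm * (a j - a k) + (\<Sum>n=1..N. \<sigma> n)) / Cm"
    using L Cm_pos by (intro divide_right_mono) auto
  also have "\<dots> = (a j - a k) + (\<Sum>n=1..N. \<sigma> n) / Cm"
    using Cm_pos by (simp add: field_simps)
  finally have "(\<Sum>i=k..j. l i / Cm) \<le> (a j - a k) + (\<Sum>n=1..N. \<sigma> n) / Cm" .
  then show "departure a l C c j - a j \<le> (\<Sum>n=1..N. \<sigma> n) / Min (C ` {1..N})"
    using k(3) step1 unfolding Cm_def by linarith
qed

end
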